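(* Let $q=p^k$ be a power of a prime $p$, $m\ge1$, and let $U_2$ act on $\mathbb{F}_q[x,y]$ fixing $x$ and sending $y\mapsto y+ax$, $a\in\mathbb{F}_q$. Put $V_2=y^q-yx^{q-1}$. Then the images in $Q(m,2)=\mathbb{F}_q[x,y]/(x^{q^m},y^{q^m})$ of the following two families of polynomials form an $\mathbb{F}_q$-basis of $Q(m,2)^{U_2}$: (1) $x^iy^j$ with $0\le i\le q^m-1$, $0\le j\le q^m-1$, $q\nmid j$, and $i+p^{v_p(j)}\ge q^m$; (2) $x^aV_2^b$ with $0\le a\le q^m-1$ and $0\le b\le q^{m-1}-1$.
   Context: $v_p(j)$ denotes the $p$-adic valuation of the positive integer $j$. $U_2\subset GL_2(\mathbb{F}_q)$ is the group of upper triangular matrices with diagonal entries $1$, acting on $\mathbb{F}_q[x,y]$ (with $x=x_1$, $y=x_2$) via $\sigma(x_j)=\sum_i\sigma_{ij}x_i$, and the action descends to $Q(m,2)$; $Q(m,2)^{U_2}$ is the subring of fixed elements. *)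

theory Defs
  imports "HOL-Computational_Algebra.Computational_Algebra"
begin

text \<open>Elements of Q(m,2) = F[x,y]/(x^N, y^N), N = q^m, are represented by their
  coefficient arrays: f (i,j) is the coefficient of x^i y^j, with i,j < N.\<close>

definition qcarrier :: "nat \<Rightarrow> (nat \<times> nat \<Rightarrow> 'a::zero) set" where
  "qcarrier N = {f. \<forall>i j. (N \<le> i \<or> N \<le> j) \<longrightarrow> f (i, j) = 0}"

definition qzero :: "nat \<times> nat \<Rightarrow> 'a::zero" where
  "qzero = (\<lambda>_. 0)"

definition qadd :: "(nat \<times> nat \<Rightarrow> 'a::plus) \<Rightarrow> (nat \<times> nat \<Rightarrow> 'a) \<Rightarrow> nat \<times> nat \<Rightarrow> 'a" where
  "qadd f g = (\<lambda>ij. f ij + g ij)"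

definition qscale :: "'a::times \<Rightarrow> (nat \<times> nat \<Rightarrow> 'a) \<Rightarrow> nat \<times> nat \<Rightarrow> 'a" where
  "qscale c f = (\<lambda>ij. c * f ij)"

definition qmono :: "nat \<Rightarrow> nat \<Rightarrow> nat \<Rightarrow> nat \<times> nat \<Rightarrow> 'a::{zero,one}" where
  "qmono N i j = (\<lambda>(i', j'). if i' = i \<and> j' = j \<and> i < N \<and> j < N then 1 else 0)"

definition qmul :: "nat \<Rightarrow> (nat \<times> nat \<Rightarrow> 'a::comm_ring_1) \<Rightarrow> (nat \<times> nat \<Rightarrow> 'a) \<Rightarrow> nat \<times> nat \<Rightarrow> 'a" where
  "qmul N f g = (\<lambda>(i, j). if i < N \<and> j < N
       then (\<Sum>i1\<le>i. \<Sum>j1\<le>j. f (i1, j1) * g (i - i1, j - j1)) else 0)"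

fun qpow :: "nat \<Rightarrow> (nat \<times> nat \<Rightarrow> 'a::comm_ring_1) \<Rightarrow> nat \<Rightarrow> nat \<times> nat \<Rightarrow> 'a" where
  "qpow N f 0 = qmono N 0 0"
| "qpow N f (Suc n) = qmul N f (qpow N f n)"

abbreviation qX :: "nat \<Rightarrow> nat \<times> nat \<Rightarrow> 'a::comm_ring_1" where
  "qX N \<equiv> qmono N 1 0"

abbreviation qY :: "nat \<Rightarrow> nat \<times> nat \<Rightarrow> 'a::comm_ring_1" where
  "qY N \<equiv> qmono N 0 1"

definition qact :: "nat \<Rightarrow> 'a::comm_ring_1 \<Rightarrow> (nat \<times> nat \<Rightarrow> 'a) \<Rightarrow> nat \<times> nat \<Rightarrow> 'a" where
  "qact N a f = (\<lambda>ij. \<Sum>i<N. \<Sum>j<N.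
       f (i, j) * qmul N (qpow N (qX N) i) (qpow N (qadd (qY N) (qscale a (qX N))) j) ij)"

definition qinvariants :: "nat \<Rightarrow> (nat \<times> nat \<Rightarrow> 'a::comm_ring_1) set" where
  "qinvariants N = {f \<in> qcarrier N. \<forall>a. qact N a f = f}"

definition qV2 :: "nat \<Rightarrow> nat \<Rightarrow> nat \<times> nat \<Rightarrow> 'a::comm_ring_1" where
  "qV2 N q = qadd (qpow N (qY N) q) (qscale (-1) (qmul N (qY N) (qpow N (qX N) (q - 1))))"

definition qlincomb :: "'i set \<Rightarrow> ('i \<Rightarrow> 'a::comm_ring_1) \<Rightarrow> ('i \<Rightarrow> nat \<times> nat \<Rightarrow> 'a) \<Rightarrow> nat \<times> nat \<Rightarrow> 'a" where
  "qlincomb I u B = (\<lambda>ij. \<Sum>t\<in>I. u t * B t ij)"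

definition is_basis_of :: "'i set \<Rightarrow> ('i \<Rightarrow> nat \<times> nat \<Rightarrow> 'a::comm_ring_1) \<Rightarrow> (nat \<times> nat \<Rightarrow> 'a) set \<Rightarrow> bool" where
  "is_basis_of I B S \<longleftrightarrow> finite I \<and> (\<forall>t\<in>I. B t \<in> S)
     \<and> (\<forall>u. qlincomb I u B = qzero \<longrightarrow> (\<forall>t\<in>I. u t = 0))
     \<and> (\<forall>f\<in>S. \<exists>u. f = qlincomb I u B)"

end

theory Submission
  imports Defs
begin


definition tr :: "nat \<Rightarrow> 'a::comm_ring_1 poly poly \<Rightarrow> nat \<times> nat \<Rightarrow> 'a" where
  "tr N P = (\<lambda>(i,j). if i < N \<and> j < N then coeff (coeff P j) i else 0)"

definition PX :: "'a::comm_ring_1 poly poly" where "PX = [:[:0,1:]:]"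
definition PY :: "'a::comm_ring_1 poly poly" where "PY = [:0,1:]"
definition PC :: "'a::comm_ring_1 \<Rightarrow> 'a poly poly" where "PC c = [:[:c:]:]"

lemma PX_pow: "(PX::'a::comm_ring_1 poly poly) ^ n = [:monom 1 n:]"
  by (induction n) (auto simp: PX_def monom_0 monom_Suc one_pCons)

lemma PY_pow: "(PY::'a::comm_ring_1 poly poly) ^ n = monom 1 n"
proof -
  have "(PY::'a poly poly) = monom 1 1" by (simp add: PY_def monom_Suc monom_0 one_pCons)
  then show ?thesis using monom_power[of "1::'a poly" 1 n] by simp
qed

lemma coeff_PC: "coeff (coeff (PC c * P) j) i = c * coeff (coeff P j) i"
  by (simp add: PC_def)

lemma coeff_PXpow: "coeff (coeff (PX ^ n * P) j) i = (if i < n then 0 else coeff (coeff P j) (i - n))"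
  by (simp add: PX_pow coeff_monom_mult)

lemma PXPY: "(PX::'a::comm_ring_1 poly poly) ^ i * PY ^ j = monom (monom 1 i) j"
  by (simp add: PX_pow PY_pow smult_monom)

lemma coeff_mon: "coeff (coeff (monom (monom c i) j) l) s = (if l = j \<and> s = i then c else 0)"
  by (simp add: coeff_monom)

lemma tr_add: "qadd (tr N P) (tr N Q) = tr N (P + Q)"
  by (auto simp: qadd_def tr_def fun_eq_iff)

lemma tr_scale: "qscale c (tr N P) = tr N (PC c * P)"
  by (auto simp: qscale_def tr_def fun_eq_iff coeff_PC)

lemma tr_mono: "qmono N i j = tr N (monom (monom 1 i) j)"
  by (auto simp: qmono_def tr_def fun_eq_iff coeff_monom)

lemma tr_mul: "qmul N (tr N P) (tr N Q) = tr N (P * Q)"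
proof -
  have "(\<Sum>i1\<le>i. \<Sum>j1\<le>j. tr N P (i1, j1) * tr N Q (i - i1, j - j1)) = coeff (coeff (P * Q) j) i"
    if "i < N" "j < N" for i j
  proof -
    have "(\<Sum>i1\<le>i. \<Sum>j1\<le>j. tr N P (i1, j1) * tr N Q (i - i1, j - j1))
        = (\<Sum>i1\<le>i. \<Sum>j1\<le>j. coeff (coeff P j1) i1 * coeff (coeff Q (j - j1)) (i - i1))"
      using that by (intro sum.cong refl) (auto simp: tr_def)
    also have "\<dots> = (\<Sum>j1\<le>j. \<Sum>i1\<le>i. coeff (coeff P j1) i1 * coeff (coeff Q (j - j1)) (i - i1))"
      by (rule sum.swap)
    also have "\<dots> = coeff (coeff (P * Q) j) i"
      by (simp add: coeff_mult coeff_sum)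
    finally show ?thesis .
  qed
  then show ?thesis by (auto simp: qmul_def tr_def fun_eq_iff)
qed

lemma tr_one: "qmono N 0 0 = tr N 1"
  by (simp add: tr_mono monom_0 one_pCons flip: one_poly_def)

lemma tr_pow: "qpow N (tr N P) n = tr N (P ^ n)"
  by (induction n) (simp_all add: tr_one tr_mul)

lemma tr_sum: "tr N (sum g A) ij = (\<Sum>x\<in>A. tr N (g x) ij)"
  by (cases ij) (auto simp: tr_def coeff_sum)

lemma qX_tr: "qX N = tr N PX"
  by (simp add: tr_mono PX_def monom_0 monom_Suc)

lemma qY_tr: "qY N = tr N PY"
  by (simp add: tr_mono PY_def monom_0 monom_Suc one_pCons)

definition Qa :: "'a::comm_ring_1 \<Rightarrow> 'a poly poly" where "Qa a = PY + PC a * PX"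

lemma tr_PC: "tr N (PC c * P) ij = c * tr N P ij"
  by (cases ij) (auto simp: tr_def coeff_PC)

lemma qact_tr: "qact N a f = tr N (\<Sum>i<N. \<Sum>j<N. PC (f (i,j)) * (PX ^ i * Qa a ^ j))"
proof -
  have Q: "qadd (qY N) (qscale a (qX N)) = tr N (Qa a)"
    by (simp only: qX_tr qY_tr tr_scale tr_add Qa_def)
  show ?thesis
    unfolding qact_def Q unfolding qX_tr tr_pow tr_mul
    by (auto simp: fun_eq_iff tr_sum tr_PC)
qed

lemma pcompose_pow: "pcompose (p ^ n) q = (pcompose p q) ^ n"
  by (induction n) (simp_all add: pcompose_mult pcompose_1)

lemma pcompose_PY: "pcompose PY q = q"
  by (simp add: PY_def pcompose_pCons pcompose_1)

lemma pcompose_PX: "pcompose (PX ^ i) q = PX ^ i"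
  by (simp add: PX_pow)

lemma pcompose_PX1: "pcompose PX q = PX"
  by (simp add: PX_def)

lemma pcompose_PC: "pcompose (PC c) q = PC c"
  by (simp add: PC_def)

lemma pcompose_mon: "pcompose (PC c * (PX ^ i * PY ^ j)) q = PC c * (PX ^ i * q ^ j)"
  by (simp add: pcompose_mult pcompose_pow pcompose_PY pcompose_PC pcompose_PX1)

lemma coeff_PCmon: "coeff (coeff (PC c * (PX ^ i * PY ^ j)) l) s = (if l = j \<and> s = i then c else 0)"
  by (simp add: coeff_PC PXPY coeff_mon)

lemma expansion:
  assumes "\<And>i j. coeff (coeff P j) i \<noteq> 0 \<Longrightarrow> i < A \<and> j < B"
  shows "P = (\<Sum>i<A. \<Sum>j<B. PC (coeff (coeff P j) i) * (PX ^ i * PY ^ j))"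
proof (rule poly_eqI, rule poly_eqI)
  fix l s
  have "coeff (coeff (\<Sum>i<A. \<Sum>j<B. PC (coeff (coeff P j) i) * (PX ^ i * PY ^ j)) l) s
      = (\<Sum>i<A. \<Sum>j<B. (if l = j \<and> s = i then coeff (coeff P j) i else 0))"
    by (simp add: coeff_sum coeff_PCmon)
  also have "\<dots> = (\<Sum>i<A. if s = i \<and> l < B then coeff (coeff P l) i else 0)"
    by (intro sum.cong refl) (auto simp: sum.delta)
  also have "\<dots> = (if s < A \<and> l < B then coeff (coeff P l) s else 0)"
    by (auto simp: sum.delta)
  also have "\<dots> = coeff (coeff P l) s"
    using assms[of s l] assms[of l s] by auto
  finally show "coeff (coeff P l) s = coeff (coeff (\<Sum>i<A. \<Sum>j<B. PC (coeff (coeff P j) i) * (PX ^ i * PY ^ j)) l) s" by simp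
qed

lemma x_bound: "\<exists>A. \<forall>i j. A \<le> i \<longrightarrow> coeff (coeff (P :: 'a::comm_ring_1 poly poly) j) i = 0"
proof (intro exI allI impI)
  fix i j assume "Suc (\<Sum>j\<le>degree P. degree (coeff P j)) \<le> i"
  show "coeff (coeff P j) i = 0"
  proof (cases "j \<le> degree P")
    case True
    then have "degree (coeff P j) \<le> (\<Sum>j\<le>degree P. degree (coeff P j))"
      by (intro member_le_sum) auto
    then show ?thesis using \<open>Suc _ \<le> i\<close> by (intro coeff_eq_0) auto
  next
    case False then show ?thesis by (simp add: coeff_eq_0)
  qed
qed

lemma tr_PXhigh: "N \<le> i \<Longrightarrow> tr N (PC c * (PX ^ i * Z)) ij = 0"
  by (cases ij) (auto simp: tr_def coeff_PC coeff_PXpow)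

lemma qact_tr_poly:
  assumes "degree P < N"
  shows "qact N a (tr N P) = tr N (pcompose P (Qa a))"
proof -
  obtain A0 where A0: "\<forall>i j. A0 \<le> i \<longrightarrow> coeff (coeff P j) i = 0" using x_bound by blast
  define A where "A = max A0 N"
  have NA: "N \<le> A" by (simp add: A_def)
  have Pexp: "P = (\<Sum>i<A. \<Sum>j<N. PC (coeff (coeff P j) i) * (PX ^ i * PY ^ j))"
  proof (rule expansion)
    fix i j assume "coeff (coeff P j) i \<noteq> 0"
    then show "i < A \<and> j < N"
    proof (intro conjI)
      show "i < A" using A0 \<open>coeff (coeff P j) i \<noteq> 0\<close> unfolding A_def by (meson max.boundedE not_le)
      show "j < N"
      proof (rule ccontr)
        assume "\<not> j < N"
        then have "coeff P j = 0" using assms by (intro coeff_eq_0) auto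
        then show False using \<open>coeff (coeff P j) i \<noteq> 0\<close> by simp
      qed
    qed
  qed
  have "pcompose P (Qa a) = pcompose (\<Sum>i<A. \<Sum>j<N. PC (coeff (coeff P j) i) * (PX ^ i * PY ^ j)) (Qa a)"
    by (rule arg_cong[where f="\<lambda>P. pcompose P (Qa a)", OF Pexp])
  also have "\<dots> = (\<Sum>i<A. \<Sum>j<N. PC (coeff (coeff P j) i) * (PX ^ i * Qa a ^ j))"
    by (simp only: pcompose_sum pcompose_mon)
  finally have "pcompose P (Qa a) = (\<Sum>i<A. \<Sum>j<N. PC (coeff (coeff P j) i) * (PX ^ i * Qa a ^ j))" .
  then have "tr N (pcompose P (Qa a)) ij
     = (\<Sum>i<A. \<Sum>j<N. tr N (PC (coeff (coeff P j) i) * (PX ^ i * Qa a ^ j)) ij)" for ij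
    by (simp add: tr_sum)
  also have "\<dots> ij = (\<Sum>i<N. \<Sum>j<N. tr N (PC (coeff (coeff P j) i) * (PX ^ i * Qa a ^ j)) ij)" for ij
    by (rule sum.mono_neutral_right) (use NA in \<open>simp_all add: tr_PXhigh\<close>)
  also have "\<dots> ij = (\<Sum>i<N. \<Sum>j<N. tr N (PC (tr N P (i,j)) * (PX ^ i * Qa a ^ j)) ij)" for ij
    by (intro sum.cong refl) (auto simp: tr_def)
  also have "\<dots> ij = qact N a (tr N P) ij" for ij
    by (simp add: qact_tr tr_sum)
  finally show ?thesis by auto
qed



lemma of_nat_card_zero: "of_nat (card (UNIV :: 'a::{comm_ring_1,finite} set)) = (0::'a)"
proof -
  have "(\<Sum>x\<in>(UNIV::'a set). x) = (\<Sum>x\<in>UNIV. x + 1)"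
    by (rule sum.reindex_bij_witness[of _ "\<lambda>y. y + 1" "\<lambda>y. y - 1"]) auto
  also have "\<dots> = (\<Sum>x\<in>(UNIV::'a set). x) + of_nat (card (UNIV :: 'a set))"
    by (simp add: sum.distrib)
  finally show ?thesis by simp
qed

lemma CHAR_eq:
  assumes "prime p" "card (UNIV :: 'a::{field,finite} set) = p ^ k"
  shows "CHAR('a) = p"
proof -
  have pos: "CHAR('a) > 0" by (rule finite_imp_CHAR_pos) simp
  then have pr: "prime CHAR('a)" by (rule prime_CHAR_semidom)
  have "CHAR('a) dvd card (UNIV::'a set)"
    using of_nat_card_zero[where 'a='a] of_nat_eq_0_iff_char_dvd by blast
  then have "CHAR('a) dvd p ^ k" using assms(2) by simp
  then have "CHAR('a) dvd p" using pr prime_dvd_power by blast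
  then show ?thesis using pr assms(1) primes_dvd_imp_eq by blast
qed

lemma pow_card_same:
  fixes x :: "'a :: {field,finite}"
  shows "x ^ card (UNIV :: 'a set) = x"
proof (cases "x = 0")
  case False
  have "x * (\<Prod>y\<in>UNIV-{0}. x * y) = x * x ^ (card (UNIV :: 'a set) - 1) * \<Prod>(UNIV-{0})"
    by (simp add: prod.distrib mult_ac)
  also have "x * x ^ (card (UNIV :: 'a set) - 1) = x ^ Suc (card (UNIV :: 'a set) - 1)"
    by (subst power_Suc) auto
  also have "Suc (card (UNIV :: 'a set) - 1) = card (UNIV :: 'a set)"
    using finite_UNIV_card_ge_0[where ?'a = 'a] by simp
  also have "(\<Prod>y\<in>UNIV-{0}. x * y) = (\<Prod>y\<in>UNIV-{0}. y)"
    by (rule prod.reindex_bij_witness[of _ "\<lambda>y. y / x" "\<lambda>y. x * y"]) (use False in auto)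
  finally show ?thesis
    by simp
qed (use finite_UNIV_card_ge_0[where ?'a = 'a] in auto)

lemma frob:
  assumes "CHAR('a::comm_ring_1) = p" "prime p"
  shows "(A + B :: 'a poly poly) ^ (p ^ n) = A ^ (p ^ n) + B ^ (p ^ n)"
  by (rule freshmans_dream') (use assms in auto)

lemma frob1:
  assumes "CHAR('a::comm_ring_1) = p" "prime p"
  shows "(A + B :: 'a poly) ^ (p ^ n) = A ^ (p ^ n) + B ^ (p ^ n)"
  by (rule freshmans_dream') (use assms in auto)

lemma binom_split: "\<exists>R. (A + B :: 'b::comm_ring_1) ^ n = A ^ n + B * R"
proof (induction n)
  case 0 then show ?case by (intro exI[of _ 0]) simp
next
  case (Suc n)
  then obtain R where R: "(A + B) ^ n = A ^ n + B * R" by blast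
  have "(A + B) ^ Suc n = A ^ Suc n + B * (A ^ n + (A + B) * R)"
    by (simp add: R algebra_simps)
  then show ?case by blast
qed

lemma binom_split2: "\<exists>R. (1 + B :: 'b::comm_ring_1) ^ n = 1 + of_nat n * B + B ^ 2 * R"
proof (induction n)
  case 0 then show ?case by (intro exI[of _ 0]) simp
next
  case (Suc n)
  then obtain R where R: "(1 + B) ^ n = 1 + of_nat n * B + B ^ 2 * R" by blast
  have "(1 + B) ^ Suc n = (1 + B) * (1 + of_nat n * B + B ^ 2 * R)"
    by (simp only: power_Suc R)
  also have "\<dots> = 1 + of_nat (Suc n) * B + B ^ 2 * (of_nat n + R + B * R)"
    by (simp add: algebra_simps power2_eq_square)
  finally have "(1 + B) ^ Suc n = 1 + of_nat (Suc n) * B + B ^ 2 * (of_nat n + R + B * R)" .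
  then show ?case by blast
qed

lemma coeff_lin_pow: "coeff ((monom 1 1 + 1 :: 'a::comm_ring_1 poly) ^ n) m = of_nat (n choose m)"
proof -
  have "(monom 1 1 + 1 :: 'a poly) ^ n = (\<Sum>k\<le>n. monom (of_nat (n choose k)) k)"
    by (simp add: binomial_ring monom_power of_nat_monom mult_monom)
  then show ?thesis
    by (auto simp: coeff_sum coeff_monom binomial_eq_0)
qed

lemma choose_nonzero:
  assumes "CHAR('a::comm_ring_1) = p" "prime p" "j > 0"
  shows "of_nat (j choose (p ^ multiplicity p j)) \<noteq> (0::'a)"
proof -
  define d where "d = p ^ multiplicity p j"
  obtain j' where j': "j = d * j'" "\<not> p dvd j'"
  proof (rule multiplicity_decompose'[of j p])
    show "j \<noteq> 0" using assms(3) by simp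
    show "\<not> is_unit p" using assms(2) by auto
  qed (auto simp: d_def)
  have d1: "d \<ge> 1" using assms(2) unfolding d_def by (simp add: Suc_le_eq prime_gt_0_nat)
  have "(monom 1 1 + 1 :: 'a poly) ^ d = monom 1 d + 1"
    using frob1[OF assms(1,2), of "monom 1 1" 1 "multiplicity p j"]
    by (simp add: d_def monom_power)
  then have "(monom 1 1 + 1 :: 'a poly) ^ j = (1 + monom 1 d) ^ j'"
    by (simp add: j' power_mult add.commute)
  moreover obtain R where R: "(1 + monom 1 d :: 'a poly) ^ j' = 1 + of_nat j' * monom 1 d + (monom 1 d) ^ 2 * R"
    using binom_split2 by blast
  ultimately have "coeff ((monom 1 1 + 1 :: 'a poly) ^ j) d = coeff (1 + of_nat j' * monom 1 d + (monom 1 d) ^ 2 * R) d"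
    by simp
  also have "\<dots> = of_nat j'"
    using d1 by (simp add: monom_power coeff_monom_mult of_nat_monom mult_monom coeff_monom)
  finally have "of_nat (j choose d) = (of_nat j' :: 'a)"
    by (simp only: coeff_lin_pow)
  moreover have "of_nat j' \<noteq> (0::'a)"
    using j'(2) assms(1) by (simp add: of_nat_eq_0_iff_char_dvd)
  ultimately show ?thesis by (simp add: d_def)
qed



definition V :: "nat \<Rightarrow> 'a::comm_ring_1 poly poly" where
  "V q = PY ^ q - PY * PX ^ (q - 1)"

lemma PC_neg1: "PC (-1) * Z = - Z"
proof -
  have "[:- 1:] = - (1::'a::comm_ring_1 poly)" by (simp add: one_pCons)
  then show ?thesis by (simp add: PC_def)
qed

lemma PC_mult: "PC a * PC b = PC (a * b)"
  by (simp add: PC_def)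

lemma PC_pow: "PC c ^ n = PC (c ^ n)"
  by (induction n) (simp_all add: PC_mult, simp add: PC_def one_pCons)

lemma of_nat_PC: "(of_nat n :: 'a::comm_ring_1 poly poly) = PC (of_nat n)"
  by (simp add: PC_def of_nat_poly)

lemma qV2_tr: "qV2 N q = tr N (V q)"
  unfolding qV2_def qY_tr qX_tr tr_pow tr_mul tr_scale tr_add
  by (simp add: V_def PC_neg1)

lemma tr_plus: "tr N (P + Q) ij = tr N P ij + tr N Q ij"
  by (cases ij) (simp add: tr_def)

lemma Qa_frob:
  assumes "CHAR('a::comm_ring_1) = p" "prime p"
  shows "Qa (c::'a) ^ (p ^ n) = PY ^ (p ^ n) + PC (c ^ (p ^ n)) * PX ^ (p ^ n)"
  unfolding Qa_def frob[OF assms] by (simp add: power_mult_distrib PC_pow)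

lemma V_inv:
  assumes "CHAR('a::comm_ring_1) = p" "prime p" "q = p ^ k" "k \<ge> 1" "(c::'a) ^ q = c"
  shows "pcompose (V q) (Qa c) = V q"
proof -
  have q1: "q \<ge> 1" using assms by (simp add: Suc_le_eq prime_gt_0_nat)
  have "pcompose (V q) (Qa c) = Qa c ^ q - Qa c * PX ^ (q - 1)"
    by (simp add: V_def pcompose_diff pcompose_pow pcompose_PY pcompose_mult pcompose_PX1)
  also have "Qa c ^ q = PY ^ q + PC c * PX ^ q"
    using Qa_frob[OF assms(1,2), of c k] assms(3,5) by simp
  also have "PX ^ q = PX * PX ^ (q - 1)"
    using q1 by (metis Suc_diff_le diff_Suc_1 power_Suc)
  finally show ?thesis
    by (simp add: V_def Qa_def algebra_simps)
qed

lemma V_monom: "q \<ge> 2 \<Longrightarrow> (V q :: 'a::comm_ring_1 poly poly) = monom 1 q - monom (monom 1 (q - 1)) 1"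
  using PXPY[of "q - 1" 1] by (simp add: V_def PY_pow mult.commute)

lemma coeff_V: "q \<ge> 2 \<Longrightarrow> coeff (V q :: 'a::comm_ring_1 poly poly) n = (if n = q then 1 else 0) - (if n = 1 then monom 1 (q - 1) else 0)"
  by (simp add: V_monom coeff_monom)

lemma degree_V: "q \<ge> 2 \<Longrightarrow> degree (V q :: 'a::comm_ring_1 poly poly) = q"
proof -
  assume q: "q \<ge> 2"
  have "coeff (V q :: 'a poly poly) q \<noteq> 0" using q by (simp add: coeff_V)
  then have "q \<le> degree (V q :: 'a poly poly)" by (rule le_degree)
  moreover have "degree (V q :: 'a poly poly) \<le> q"
    by (rule degree_le) (use q in \<open>simp add: coeff_V\<close>)
  ultimately show ?thesis by simp
qed

lemma lead_V: "q \<ge> 2 \<Longrightarrow> lead_coeff (V q :: 'a::comm_ring_1 poly poly) = 1"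
  by (simp add: degree_V coeff_V)

lemma coeff_PXmul: "coeff (PX ^ a * P) j = monom 1 a * coeff P j"
  by (simp add: PX_pow)

lemma degree_XV: "q \<ge> 2 \<Longrightarrow> degree (PX ^ a * V q ^ b :: 'a::comm_ring_1 poly poly) \<le> q * b"
proof -
  assume q: "q \<ge> 2"
  have "degree (PX ^ a * V q ^ b :: 'a poly poly) \<le> degree (PX ^ a :: 'a poly poly) + degree (V q ^ b :: 'a poly poly)"
    by (rule degree_mult_le)
  also have "degree (PX ^ a :: 'a poly poly) = 0" by (simp add: PX_pow)
  also have "degree (V q ^ b :: 'a poly poly) \<le> degree (V q :: 'a poly poly) * b" by (rule degree_power_le)
  finally show ?thesis using q by (simp add: degree_V mult.commute)
qed

lemma coeff_XV_top:
  assumes "q \<ge> 2"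
  shows "coeff (PX ^ a * V q ^ b :: 'a::field poly poly) (q * b) = monom 1 a"
proof -
  have "V q \<noteq> (0 :: 'a poly poly)" using lead_V[OF assms, where 'a='a] by auto
  then have "degree (V q ^ b :: 'a poly poly) = q * b"
    using degree_power_eq[of "V q :: 'a poly poly" b] degree_V[OF assms, where 'a='a] by (simp add: mult.commute)
  then have "coeff (V q ^ b :: 'a poly poly) (q * b) = 1"
    using lead_coeff_power[of "V q :: 'a poly poly" b] lead_V[OF assms, where 'a='a] by simp
  then show ?thesis by (simp add: coeff_PXmul)
qed

lemma coeff_XV_above:
  assumes "q \<ge> 2" "q * b < j"
  shows "coeff (PX ^ a * V q ^ b :: 'a::comm_ring_1 poly poly) j = 0"
  using degree_XV[OF assms(1), of a b, where 'a='a] assms(2) by (intro coeff_eq_0) auto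

lemma term_rearr: "PX ^ i * (of_nat n * PY ^ k * (PC a * PX) ^ m) = PC (of_nat n * a ^ m) * (PX ^ (i + m) * PY ^ k)"
  by (simp add: of_nat_PC power_mult_distrib PC_pow power_add PC_mult[symmetric] mult_ac)

lemma coeff_PXQ:
  "coeff (coeff (PX ^ i * Qa a ^ j) l) s
     = (if l \<le> j \<and> s = i + (j - l) then of_nat (j choose l) * a ^ (j - l) else 0)"
proof -
  have "PX ^ i * Qa a ^ j = (\<Sum>k\<le>j. PX ^ i * (of_nat (j choose k) * PY ^ k * (PC a * PX) ^ (j - k)))"
    by (simp add: Qa_def binomial_ring sum_distrib_left)
  also have "\<dots> = (\<Sum>k\<le>j. PC (of_nat (j choose k) * a ^ (j - k)) * (PX ^ (i + (j - k)) * PY ^ k))"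
    by (simp only: term_rearr)
  finally have "coeff (coeff (PX ^ i * Qa a ^ j) l) s
      = (\<Sum>k\<le>j. if l = k \<and> s = i + (j - k) then of_nat (j choose k) * a ^ (j - k) else 0)"
    by (simp add: coeff_sum coeff_PCmon)
  also have "\<dots> = (\<Sum>k\<le>j. if k = l then (if s = i + (j - l) then of_nat (j choose l) * a ^ (j - l) else 0) else 0)"
    by (intro sum.cong refl) auto
  also have "\<dots> = (if l \<le> j \<and> s = i + (j - l) then of_nat (j choose l) * a ^ (j - l) else 0)"
    by (simp add: sum.delta)
  finally show ?thesis .
qed



lemma sum_delta1: "(\<Sum>y<(B::nat). if y = b then (X::'b::comm_monoid_add) else 0) = (if b < B then X else 0)"
  by (simp add: sum.delta)

lemma sum_delta2:
  "(\<Sum>x<(A::nat). \<Sum>y<(B::nat). if x = a \<and> y = b then X else 0) = (if a < A \<and> b < B then X else (0::'b::comm_monoid_add))"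
proof -
  have "(\<Sum>x<A. \<Sum>y<B. if x = a \<and> y = b then X else 0) = (\<Sum>x<A. if x = a then (if b < B then X else 0) else 0)"
    by (intro sum.cong refl) (auto simp: sum_delta1)
  also have "\<dots> = (if a < A \<and> b < B then X else 0)"
    by (simp add: sum.delta)
  finally show ?thesis .
qed

lemma key:
  fixes f :: "nat \<times> nat \<Rightarrow> 'a::{field,finite}"
  assumes charp: "CHAR('a) = p" and pr: "prime p" and card: "card (UNIV::'a set) = q" and qk: "q = p ^ k"
    and inv: "\<forall>a. qact N a f = f"
    and top: "\<forall>i' j'. j < j' \<longrightarrow> f (i', j') = 0"
    and j0: "0 < j" and jN: "j < N" and nq: "\<not> q dvd j"
    and iN: "i + p ^ multiplicity p j < N"
  shows "f (i, j) = 0"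
proof -
  define d where "d = p ^ multiplicity p j"
  have dj: "d dvd j" by (simp add: d_def multiplicity_dvd)
  have d_le: "d \<le> j" using dj j0 by (simp add: dvd_imp_le)
  have d1: "d \<ge> 1" using pr unfolding d_def by (simp add: Suc_le_eq prime_gt_0_nat)
  have dq: "d < q"
  proof (rule ccontr)
    assume "\<not> d < q"
    then have "p ^ k \<le> p ^ multiplicity p j" using qk d_def by simp
    then have "k \<le> multiplicity p j"
      using pr by (simp add: power_le_imp_le_exp prime_gt_Suc_0_nat)
    then have "q dvd j" using multiplicity_dvd'[of k p j] qk by simp
    with nq show False ..
  qed
  define l where "l = j - d"
  define s where "s = i + d"
  have sN: "s < N" using iN by (simp add: s_def d_def)
  have lN: "l < N" using jN by (simp add: l_def)
  define c where "c i' j' = (if l \<le> j' \<and> s = i' + (j' - l) then f (i',j') * of_nat (j' choose l) else 0)" for i' j'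
  define Phi where "Phi = (\<Sum>i'<N. \<Sum>j'<N. monom (c i' j') (j' - l))"
  have val: "poly Phi a = f (s, l)" for a
  proof -
    have "f (s,l) = qact N a f (s,l)" using inv by simp
    also have "\<dots> = (\<Sum>i'<N. \<Sum>j'<N. f (i',j') * coeff (coeff (PX ^ i' * Qa a ^ j') l) s)"
      using sN lN by (simp add: qact_tr tr_def coeff_sum coeff_PC)
    also have "\<dots> = (\<Sum>i'<N. \<Sum>j'<N. c i' j' * a ^ (j' - l))"
      by (intro sum.cong refl) (simp add: coeff_PXQ c_def)
    also have "\<dots> = poly Phi a" by (simp add: Phi_def poly_sum poly_monom)
    finally show ?thesis by simp
  qed
  have coeffPhi: "coeff Phi n = (\<Sum>i'<N. \<Sum>j'<N. if j' - l = n then c i' j' else 0)" for n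
    by (simp add: Phi_def coeff_sum coeff_monom)
  have degPhi: "degree Phi \<le> d"
  proof (rule degree_le, intro allI impI)
    fix n assume "d < n"
    show "coeff Phi n = 0" unfolding coeffPhi
    proof (intro sum.neutral ballI)
      fix i' j' assume "i' \<in> {..<N}" "j' \<in> {..<N}"
      show "(if j' - l = n then c i' j' else 0) = 0"
      proof (cases "j' - l = n \<and> l \<le> j'")
        case True
        then have "j < j'" using \<open>d < n\<close> d_le unfolding l_def by arith
        then show ?thesis using top by (simp add: c_def)
      qed (auto simp: c_def)
    qed
  qed
  have "Phi = [:f (s,l):]"
  proof (rule poly_eqI_degree[of UNIV])
    fix x show "poly Phi x = poly [:f (s,l):] x" using val by simp
  next
    show "degree Phi < card (UNIV::'a set)" using degPhi dq card by simp
  next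
    show "degree [:f (s,l):] < card (UNIV::'a set)" using dq card by simp
  qed
  then have "coeff Phi d = 0" using d1 by (simp add: coeff_pCons split: nat.split)
  moreover have "coeff Phi d = f (i,j) * of_nat (j choose l)"
  proof -
    have "coeff Phi d = (\<Sum>i'<N. \<Sum>j'<N. if i' = i \<and> j' = j then f (i,j) * of_nat (j choose l) else 0)"
      unfolding coeffPhi
    proof (intro sum.cong refl)
      fix i' j' assume "i' \<in> {..<N}" "j' \<in> {..<N}"
      have eqv: "(j' - l = d \<and> l \<le> j' \<and> s = i' + (j' - l)) \<longleftrightarrow> (i' = i \<and> j' = j)"
        using d_le unfolding l_def s_def by arith
      show "(if j' - l = d then c i' j' else 0) = (if i' = i \<and> j' = j then f (i,j) * of_nat (j choose l) else 0)"
        using eqv unfolding c_def by (smt (verit))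
    qed
    also have "\<dots> = f (i,j) * of_nat (j choose l)"
      using iN jN by (simp add: sum_delta2)
    finally show ?thesis .
  qed
  moreover have "of_nat (j choose l) \<noteq> (0::'a)"
    using choose_nonzero[OF charp pr j0] binomial_symmetric[OF d_le] by (simp add: l_def d_def)
  ultimately show ?thesis by simp
qed

lemma inv_Inl:
  fixes c :: "'a::comm_ring_1"
  assumes charp: "CHAR('a) = p" and pr: "prime p"
    and iN: "i < N" and jN: "j < N" and j0: "0 < j" and big: "N \<le> i + p ^ multiplicity p j"
  shows "qact N c (qmono N i j) = qmono N i j"
proof -
  define d where "d = p ^ multiplicity p j"
  obtain j' where j': "j = d * j'"
    using multiplicity_dvd[of p j] unfolding d_def by (auto elim: dvdE)
  have e: "qmono N i j = tr N (PX ^ i * PY ^ j :: 'a poly poly)" by (simp add: tr_mono PXPY)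
  have deg: "degree (PX ^ i * PY ^ j :: 'a poly poly) < N" using jN by (simp add: PXPY degree_monom_eq)
  have "pcompose (PX ^ i * PY ^ j) (Qa c) = PX ^ i * Qa c ^ j"
    by (simp add: pcompose_mult pcompose_pow pcompose_PY pcompose_PX1)
  also have "Qa c ^ j = (Qa c ^ d) ^ j'"
    by (simp add: j' power_mult)
  also have "Qa c ^ d = PY ^ d + PC (c ^ d) * PX ^ d"
    using Qa_frob[OF charp pr, of c "multiplicity p j", folded d_def] .
  also obtain R where "(PY ^ d + PC (c ^ d) * PX ^ d) ^ j' = (PY ^ d) ^ j' + (PC (c ^ d) * PX ^ d) * R"
    using binom_split by blast
  also have "PX ^ i * ((PY ^ d) ^ j' + (PC (c ^ d) * PX ^ d) * R) = PX ^ i * PY ^ j + PC (c ^ d) * (PX ^ (i + d) * R)"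
    by (simp add: j' power_mult power_add algebra_simps)
  finally have *: "pcompose (PX ^ i * PY ^ j) (Qa c) = PX ^ i * PY ^ j + PC (c ^ d) * (PX ^ (i + d) * R)" .
  have big': "N \<le> i + d" using big by (simp add: d_def)
  show ?thesis
    unfolding e qact_tr_poly[OF deg] * using big'
    by (auto simp: fun_eq_iff tr_plus tr_PXhigh)
qed

lemma inv_Inr:
  fixes c :: "'a::{field,finite}"
  assumes charp: "CHAR('a) = p" and pr: "prime p" and card: "card (UNIV::'a set) = q"
    and qk: "q = p ^ k" and k1: "k \<ge> 1" and bN: "q * b < N"
  shows "qact N c (tr N (PX ^ a * V q ^ b)) = tr N (PX ^ a * V q ^ b)"
proof -
  have q2: "q \<ge> 2"
  proof -
    have "p ^ 1 \<le> p ^ k" by (intro power_increasing) (use k1 prime_gt_1_nat[OF pr] in auto)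
    then show ?thesis using qk prime_ge_2_nat[OF pr] by simp
  qed
  have deg: "degree (PX ^ a * V q ^ b :: 'a poly poly) < N"
    using degree_XV[OF q2, of a b, where 'a='a] bN by simp
  have cq: "c ^ q = c" using pow_card_same[of c] card by simp
  have "pcompose (PX ^ a * V q ^ b) (Qa c) = PX ^ a * V q ^ b"
    by (simp add: pcompose_mult pcompose_pow pcompose_PX1 V_inv[OF charp pr qk k1 cq])
  then show ?thesis by (simp add: qact_tr_poly[OF deg])
qed



lemma lin_indep:
  fixes B :: "'i \<Rightarrow> nat \<times> nat \<Rightarrow> 'a::comm_ring_1"
  assumes fin: "finite I" and inj: "inj_on lead I" and one: "\<forall>t\<in>I. B t (lead t) = 1"
    and zero: "\<forall>t\<in>I. \<forall>i' j'. snd (lead t) < j' \<or> (j' = snd (lead t) \<and> i' \<noteq> fst (lead t)) \<longrightarrow> B t (i', j') = 0"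
    and lc: "qlincomb I u B = qzero"
  shows "\<forall>t\<in>I. u t = 0"
proof (rule ccontr)
  assume "\<not> (\<forall>t\<in>I. u t = 0)"
  define T where "T = {t\<in>I. u t \<noteq> 0}"
  have Tne: "T \<noteq> {}" and Tfin: "finite T" using \<open>\<not> _\<close> fin by (auto simp: T_def)
  define J where "J = Max ((\<lambda>t. snd (lead t)) ` T)"
  have "J \<in> (\<lambda>t. snd (lead t)) ` T" unfolding J_def using Tne Tfin by (intro Max_in) auto
  then obtain t0 where t0: "t0 \<in> T" "snd (lead t0) = J" by auto
  have ge: "snd (lead t) \<le> J" if "t \<in> T" for t
    using Tfin that unfolding J_def by (intro Max_ge) auto
  have "0 = qlincomb I u B (lead t0)" using lc by (simp add: qzero_def)
  also have "\<dots> = (\<Sum>t\<in>I. u t * B t (lead t0))" by (simp add: qlincomb_def)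
  also have "\<dots> = (\<Sum>t\<in>I. if t = t0 then u t0 else 0)"
  proof (intro sum.cong refl)
    fix t assume tI: "t \<in> I"
    show "u t * B t (lead t0) = (if t = t0 then u t0 else 0)"
    proof (cases "t = t0")
      case True then show ?thesis using one t0 by (simp add: T_def)
    next
      case False
      show ?thesis
      proof (cases "t \<in> T")
        case False then show ?thesis using tI \<open>t \<noteq> t0\<close> by (simp add: T_def)
      next
        case True
        have "lead t \<noteq> lead t0" using inj tI t0(1) \<open>t \<noteq> t0\<close> by (auto simp: T_def inj_on_def)
        then have "snd (lead t) < snd (lead t0) \<or> (snd (lead t0) = snd (lead t) \<and> fst (lead t0) \<noteq> fst (lead t))"
          using ge[OF True] t0(2) by (metis le_neq_implies_less prod.collapse)
        then have "B t (fst (lead t0), snd (lead t0)) = 0" using zero tI by blast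
        then show ?thesis using \<open>t \<noteq> t0\<close> by simp
      qed
    qed
  qed
  also have "\<dots> = u t0" using t0(1) fin by (simp add: T_def)
  finally show False using t0(1) by (simp add: T_def)
qed

lemma spanning:
  fixes B :: "'i \<Rightarrow> nat \<times> nat \<Rightarrow> 'a::comm_ring_1"
  assumes fin: "finite I" and inj: "inj_on lead I" and one: "\<forall>t\<in>I. B t (lead t) = 1"
    and zero: "\<forall>t\<in>I. \<forall>i' j'. snd (lead t) < j' \<or> (j' = snd (lead t) \<and> i' \<noteq> fst (lead t)) \<longrightarrow> B t (i', j') = 0"
    and diffS: "\<forall>f\<in>S. \<forall>g\<in>S. (\<lambda>ij. f ij - g ij) \<in> S"
    and lcS: "\<forall>u. qlincomb I u B \<in> S"
    and bnd: "\<forall>f\<in>S. \<forall>i j. N \<le> j \<longrightarrow> f (i,j) = 0"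
    and H1: "\<forall>f\<in>S. \<forall>J. (\<forall>i' j'. J < j' \<longrightarrow> f (i',j') = 0) \<longrightarrow> (\<forall>i. f (i,J) \<noteq> 0 \<longrightarrow> (i,J) \<in> lead ` I)"
  shows "\<forall>f\<in>S. \<exists>u. f = qlincomb I u B"
proof -
  have claim: "\<forall>f\<in>S. (\<forall>i j. J \<le> j \<longrightarrow> f (i,j) = 0) \<longrightarrow> (\<exists>u. f = qlincomb I u B)" for J
  proof (induction J)
    case 0
    show ?case
    proof (intro ballI impI)
      fix f :: "nat \<times> nat \<Rightarrow> 'a" assume "\<forall>i j. 0 \<le> j \<longrightarrow> f (i,j) = 0"
      then have "f = qlincomb I (\<lambda>_. 0) B" by (auto simp: qlincomb_def fun_eq_iff)
      then show "\<exists>u. f = qlincomb I u B" by blast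
    qed
  next
    case (Suc J)
    show ?case
    proof (intro ballI impI)
      fix f assume fS: "f \<in> S" and fz: "\<forall>i j. Suc J \<le> j \<longrightarrow> f (i,j) = 0"
      define u where "u t = (if snd (lead t) = J then f (lead t) else 0)" for t
      define g where "g = (\<lambda>ij. f ij - qlincomb I u B ij)"
      have gS: "g \<in> S" using diffS fS lcS unfolding g_def by blast
      have gz: "g (i, j) = 0" if "J \<le> j" for i j
      proof (cases "J < j")
        case True
        have "qlincomb I u B (i,j) = 0"
          unfolding qlincomb_def
        proof (intro sum.neutral ballI)
          fix t assume "t \<in> I"
          show "u t * B t (i,j) = 0"
          proof (cases "snd (lead t) = J")
            case True then show ?thesis using zero \<open>t \<in> I\<close> \<open>J < j\<close> by auto
          qed (simp add: u_def)
        qed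
        then show ?thesis using fz True by (simp add: g_def)
      next
        case False
        then have jJ: "j = J" using that by simp
        have "qlincomb I u B (i,J) = (\<Sum>t\<in>I. if lead t = (i,J) then f (i,J) else 0)"
          unfolding qlincomb_def
        proof (intro sum.cong refl)
          fix t assume tI: "t \<in> I"
          show "u t * B t (i,J) = (if lead t = (i,J) then f (i,J) else 0)"
          proof (cases "lead t = (i,J)")
            case True
            then have "B t (i,J) = 1" using one tI by metis
            then show ?thesis using True by (simp add: u_def)
          next
            case False
            note ne = this
            show ?thesis
            proof (cases "snd (lead t) = J")
              case True
              then have "i \<noteq> fst (lead t)" using ne by (metis prod.collapse)
              then have "B t (i,J) = 0" using zero tI True by auto
              then show ?thesis using ne by simp
            qed (use ne in \<open>simp add: u_def\<close>)
          qed
        qed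
        also have "\<dots> = f (i,J)"
        proof (cases "(i,J) \<in> lead ` I")
          case True
          then obtain t0 where t0: "t0 \<in> I" "lead t0 = (i,J)" by auto
          have "(\<Sum>t\<in>I. if lead t = (i,J) then f (i,J) else 0) = (\<Sum>t\<in>I. if t = t0 then f (i,J) else 0)"
            using inj t0 by (intro sum.cong refl) (auto simp: inj_on_def)
          also have "\<dots> = f (i,J)" using t0 fin by simp
          finally show ?thesis .
        next
          case False
          then have "f (i,J) = 0"
            using H1 fS fz by (metis Suc_leI)
          moreover have "(\<Sum>t\<in>I. if lead t = (i,J) then f (i,J) else 0) = 0"
            using False by (intro sum.neutral) force
          ultimately show ?thesis by simp
        qed
        finally show ?thesis by (simp add: g_def jJ)
      qed
      then obtain w where w: "g = qlincomb I w B" using Suc.IH gS by blast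
      have "f = qlincomb I (\<lambda>t. u t + w t) B"
      proof
        fix ij
        have "f ij = g ij + qlincomb I u B ij" by (simp add: g_def)
        then show "f ij = qlincomb I (\<lambda>t. u t + w t) B ij"
          by (simp add: w qlincomb_def sum.distrib algebra_simps)
      qed
      then show "\<exists>u. f = qlincomb I u B" by blast
    qed
  qed
  show ?thesis using claim[of N] bnd by blast
qed



lemma qact_diff: "qact N a (\<lambda>ij. f ij - g ij) = (\<lambda>ij. qact N a f ij - qact N a g ij)"
  unfolding qact_def by (simp add: fun_eq_iff sum_subtractf left_diff_distrib)

lemma qact_lincomb: "qact N a (qlincomb I u B) = qlincomb I u (\<lambda>t. qact N a (B t))"
proof
  fix ij
  define M where "M i j = qmul N (qpow N (qX N) i) (qpow N (qadd (qY N) (qscale a (qX N))) j) ij" for i j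
  have "qact N a (qlincomb I u B) ij = (\<Sum>i<N. \<Sum>j<N. \<Sum>t\<in>I. u t * (B t (i, j) * M i j))"
    unfolding qact_def qlincomb_def M_def by (simp add: sum_distrib_right mult.assoc)
  also have "\<dots> = (\<Sum>i<N. \<Sum>t\<in>I. \<Sum>j<N. u t * (B t (i, j) * M i j))"
    by (intro sum.cong refl) (rule sum.swap)
  also have "\<dots> = (\<Sum>t\<in>I. \<Sum>i<N. \<Sum>j<N. u t * (B t (i, j) * M i j))"
    by (rule sum.swap)
  also have "\<dots> = qlincomb I u (\<lambda>t. qact N a (B t)) ij"
    unfolding qact_def qlincomb_def M_def by (simp add: sum_distrib_left)
  finally show "qact N a (qlincomb I u B) ij = qlincomb I u (\<lambda>t. qact N a (B t)) ij" .
qed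

lemma tr_carrier: "tr N P \<in> qcarrier N"
  by (auto simp: qcarrier_def tr_def)

lemma qmono_carrier: "qmono N i j \<in> qcarrier N"
  by (auto simp: qcarrier_def qmono_def)

lemma Binr: "qmul N (qpow N (qX N) a) (qpow N (qV2 N q) b) = tr N (PX ^ a * V q ^ b)"
  by (simp only: qX_tr qV2_tr tr_pow tr_mul)

theorem mainTheorem12:
  fixes p k m q :: nat
  assumes "prime p" and "card (UNIV :: 'a set) = q" and "q = p ^ k" and "m \<ge> 1"
  shows "is_basis_of
     (Inl ` {(i, j). i \<le> q ^ m - 1 \<and> j \<le> q ^ m - 1 \<and> \<not> q dvd j
                    \<and> i + p ^ multiplicity p j \<ge> q ^ m}
      \<union> Inr ` {(a, b). a \<le> q ^ m - 1 \<and> b \<le> q ^ (m - 1) - 1})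
     (\<lambda>t. case t of
        Inl (i, j) \<Rightarrow> qmono (q ^ m) i j
      | Inr (a, b) \<Rightarrow> qmul (q ^ m) (qpow (q ^ m) (qX (q ^ m)) a) (qpow (q ^ m) (qV2 (q ^ m) q) b))
     (qinvariants (q ^ m) :: (nat \<times> nat \<Rightarrow> 'a::{field,finite}) set)"
proof -
  note pr = assms(1) and card = assms(2) and qk = assms(3) and m1 = assms(4)
  define N where "N = q ^ m"
  define I1 where "I1 = {(i, j). i \<le> q ^ m - 1 \<and> j \<le> q ^ m - 1 \<and> \<not> q dvd j \<and> i + p ^ multiplicity p j \<ge> q ^ m}"
  define I2 where "I2 = {(a, b). a \<le> q ^ m - 1 \<and> b \<le> q ^ (m - 1) - 1}"
  define I where "I = Inl ` I1 \<union> Inr ` I2"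
  define B :: "nat \<times> nat + nat \<times> nat \<Rightarrow> nat \<times> nat \<Rightarrow> 'a" where
    "B = (\<lambda>t. case t of
        Inl (i, j) \<Rightarrow> qmono (q ^ m) i j
      | Inr (a, b) \<Rightarrow> qmul (q ^ m) (qpow (q ^ m) (qX (q ^ m)) a) (qpow (q ^ m) (qV2 (q ^ m) q) b))"
  define S where "S = (qinvariants (q ^ m) :: (nat \<times> nat \<Rightarrow> 'a) set)"
  define lead :: "nat \<times> nat + nat \<times> nat \<Rightarrow> nat \<times> nat" where
    "lead = (\<lambda>t. case t of Inl (i, j) \<Rightarrow> (i, j) | Inr (a, b) \<Rightarrow> (a, q * b))"
  have q2: "q \<ge> 2"
  proof -
    have "card {0::'a, 1} = 2" by simp
    moreover have "card {0::'a, 1} \<le> card (UNIV::'a set)" by (rule card_mono) auto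
    ultimately show ?thesis using card by simp
  qed
  have k1: "k \<ge> 1" using q2 qk by (cases k) auto
  have charp: "CHAR('a) = p" using CHAR_eq[OF pr] card qk by simp
  have qm: "q ^ m = q * q ^ (m - 1)" using m1 by (cases m) auto
  have Npos: "N > 0" using q2 by (simp add: N_def)
  have I1_iff: "(i, j) \<in> I1 \<longleftrightarrow> i < N \<and> j < N \<and> \<not> q dvd j \<and> N \<le> i + p ^ multiplicity p j" for i j
  proof -
    have le_iff: "x \<le> N - Suc 0 \<longleftrightarrow> x < N" for x using Npos by arith
    show ?thesis unfolding I1_def N_def[symmetric] by (simp add: le_iff)
  qed
  have I2_iff: "(a, b) \<in> I2 \<longleftrightarrow> a < N \<and> q * b < N" for a b
  proof -
    have pos: "q ^ (m - 1) > 0" using q2 by simp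
    have e1: "b \<le> q ^ (m - 1) - 1 \<longleftrightarrow> b < q ^ (m - 1)" using pos by arith
    have e2: "b < q ^ (m - 1) \<longleftrightarrow> q * b < N" using q2 by (simp add: N_def qm)
    have e3: "a \<le> q ^ m - 1 \<longleftrightarrow> a < N" using Npos unfolding N_def by arith
    show ?thesis unfolding I2_def using e1 e2 e3 by simp
  qed
  have Binl: "B (Inl (i, j)) = qmono N i j" for i j by (simp add: B_def N_def)
  have Binr': "B (Inr (a, b)) = tr N (PX ^ a * V q ^ b)" for a b
    using Binr[where N="q ^ m" and a=a and b=b and q=q, where 'a='a] by (simp add: B_def N_def)
  have lead_l: "lead (Inl (i, j)) = (i, j)" for i j by (simp add: lead_def)
  have lead_r: "lead (Inr (a, b)) = (a, q * b)" for a b by (simp add: lead_def)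

  have finI: "finite I"
  proof -
    have "I1 \<subseteq> {..<N} \<times> {..<N}" by (auto simp: I1_iff)
    then have "finite I1" by (rule finite_subset) simp
    moreover have "I2 \<subseteq> {..<N} \<times> {..<N}"
    proof
      fix x assume "x \<in> I2"
      then obtain a b where x: "x = (a, b)" "a < N" "q * b < N" by (cases x) (auto simp: I2_iff)
      then have "b < N" using q2 by (metis dual_order.strict_trans2 le_add1 mult_2 mult_le_mono1)
      then show "x \<in> {..<N} \<times> {..<N}" using x by auto
    qed
    then have "finite I2" by (rule finite_subset) simp
    ultimately show ?thesis by (simp add: I_def)
  qed

  have injI: "inj_on lead I"
  proof (rule inj_onI)
    fix s t assume "s \<in> I" "t \<in> I" "lead s = lead t"
    then show "s = t" using q2
      by (auto simp: I_def lead_l lead_r I1_iff)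
  qed

  have oneI: "\<forall>t\<in>I. B t (lead t) = 1"
  proof
    fix t assume "t \<in> I"
    then consider (l) i j where "t = Inl (i, j)" "(i, j) \<in> I1" | (r) a b where "t = Inr (a, b)" "(a, b) \<in> I2"
      by (auto simp: I_def)
    then show "B t (lead t) = 1"
    proof cases
      case l then show ?thesis by (simp add: Binl lead_l qmono_def I1_iff)
    next
      case r
      then have "coeff (coeff (PX ^ a * V q ^ b :: 'a poly poly) (q * b)) a = 1"
        using coeff_XV_top[OF q2, of a b, where 'a='a] by simp
      then show ?thesis using r by (simp add: Binr' lead_r tr_def I2_iff)
    qed
  qed

  have zeroI: "\<forall>t\<in>I. \<forall>i' j'. snd (lead t) < j' \<or> (j' = snd (lead t) \<and> i' \<noteq> fst (lead t)) \<longrightarrow> B t (i', j') = 0"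
  proof (intro ballI allI impI)
    fix t i' j' assume tI: "t \<in> I" and c: "snd (lead t) < j' \<or> (j' = snd (lead t) \<and> i' \<noteq> fst (lead t))"
    from tI consider (l) i j where "t = Inl (i, j)" "(i, j) \<in> I1" | (r) a b where "t = Inr (a, b)" "(a, b) \<in> I2"
      by (auto simp: I_def)
    then show "B t (i', j') = 0"
    proof cases
      case l then show ?thesis using c by (auto simp: Binl lead_l qmono_def)
    next
      case r
      show ?thesis
      proof (cases "q * b < j'")
        case True
        then show ?thesis using coeff_XV_above[OF q2 True, of a, where 'a='a]
          by (simp add: r Binr' tr_def)
      next
        case False
        then have "j' = q * b" "i' \<noteq> a" using c r by (auto simp: lead_r)
        then show ?thesis using coeff_XV_top[OF q2, of a b, where 'a='a]
          by (simp add: r Binr' tr_def coeff_monom)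
      qed
    qed
  qed

  have BS: "\<forall>t\<in>I. B t \<in> S"
  proof
    fix t assume "t \<in> I"
    then consider (l) i j where "t = Inl (i, j)" "(i, j) \<in> I1" | (r) a b where "t = Inr (a, b)" "(a, b) \<in> I2"
      by (auto simp: I_def)
    then show "B t \<in> S"
    proof cases
      case l
      then have "0 < j" using I1_iff by (metis dvd_0_right gr0I)
      then show ?thesis using l inv_Inl[OF charp pr, of i N j] qmono_carrier[of N i j]
        by (auto simp: S_def qinvariants_def Binl I1_iff N_def)
    next
      case r
      then show ?thesis
        using inv_Inr[OF charp pr card qk k1, of b N _ a] tr_carrier[of N "PX ^ a * V q ^ b :: 'a poly poly"]
        by (auto simp: S_def qinvariants_def Binr' I2_iff N_def)
    qed
  qed

  have diffS: "\<forall>f\<in>S. \<forall>g\<in>S. (\<lambda>ij. f ij - g ij) \<in> S"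
    by (auto simp: S_def qinvariants_def qcarrier_def qact_diff)

  have lcS: "\<forall>u. qlincomb I u B \<in> S"
  proof
    fix u
    have inv: "qact (q ^ m) a (B t) = B t" if "t \<in> I" for a t
      using BS that by (auto simp: S_def qinvariants_def)
    have car: "B t \<in> qcarrier (q ^ m)" if "t \<in> I" for t
      using BS that by (auto simp: S_def qinvariants_def)
    have "qact (q ^ m) a (qlincomb I u B) = qlincomb I u B" for a
      unfolding qact_lincomb using inv by (auto simp: qlincomb_def fun_eq_iff intro!: sum.cong)
    moreover have "qlincomb I u B \<in> qcarrier (q ^ m)"
      using car by (auto simp: qcarrier_def qlincomb_def intro!: sum.neutral)
    ultimately show "qlincomb I u B \<in> S" by (simp add: S_def qinvariants_def)
  qed

  have bnd: "\<forall>f\<in>S. \<forall>i j. N \<le> j \<longrightarrow> f (i,j) = 0"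
    by (auto simp: S_def qinvariants_def qcarrier_def N_def)

  have H1: "\<forall>f\<in>S. \<forall>J. (\<forall>i' j'. J < j' \<longrightarrow> f (i',j') = 0) \<longrightarrow> (\<forall>i. f (i,J) \<noteq> 0 \<longrightarrow> (i,J) \<in> lead ` I)"
  proof (intro ballI allI impI)
    fix f J i assume fS: "f \<in> S" and top: "\<forall>i' j'. J < j' \<longrightarrow> f (i',j') = 0" and nz: "f (i,J) \<noteq> 0"
    have iN: "i < N" and JN: "J < N"
      using fS nz by (auto simp: S_def qinvariants_def qcarrier_def N_def not_less[symmetric])
    show "(i,J) \<in> lead ` I"
    proof (cases "q dvd J")
      case True
      then obtain b where b: "J = q * b" by (auto elim: dvdE)
      then have "(i, b) \<in> I2" using iN JN by (simp add: I2_iff)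
      then show ?thesis using b by (force simp: I_def lead_r)
    next
      case False
      then have J0: "0 < J" by (metis dvd_0_right gr0I)
      have "N \<le> i + p ^ multiplicity p J"
      proof (rule ccontr)
        assume "\<not> N \<le> i + p ^ multiplicity p J"
        then have "f (i, J) = 0"
          using key[OF charp pr card qk _ top J0 JN False, of i] fS
          by (auto simp: S_def qinvariants_def N_def)
        with nz show False ..
      qed
      then have "(i, J) \<in> I1" using iN JN False by (simp add: I1_iff)
      then show ?thesis by (force simp: I_def lead_l)
    qed
  qed

  have "is_basis_of I B S"
    unfolding is_basis_of_def
    using finI BS lin_indep[OF finI injI oneI zeroI] spanning[OF finI injI oneI zeroI diffS lcS bnd H1]
    by blast
  then show ?thesis by (simp add: I_def I1_def I2_def B_def S_def)
qed

end
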